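(* Let $\Gamma$ be a cocompact Fuchsian triangle group with signature $(m_1,m_2,m_3)$ and let $\mathcal{F}$ be a quadrilateral fundamental domain of $\Gamma$ of the form described in the context. If at least two of $m_1,m_2,m_3$ are odd, then the extension of every side of $\mathcal{F}$ (the full geodesic containing that side) intersects $\Gamma(\mathcal{F}^\circ)=\bigcup_{\gamma\in\Gamma}\gamma(\mathcal{F}^\circ)$.
   Context: $\mathbb{D}$ is the Poincaré disc with hyperbolic metric induced by $ds=2|dz|/(1-|z|^2)$. A cocompact Fuchsian triangle group with signature $(m_1,m_2,m_3)$, where $1/m_1+1/m_2+1/m_3<1$, is a cocompact discrete group of orientation-preserving isometries of $\mathbb{D}$ with presentation $\langle A,B:A^{m_1}=B^{m_2}=(AB)^{m_3}=I\rangle$. Its quadrilateral (convex) fundamental domain $\mathcal{F}$ has vertices $v_1,v_2,v_3,v_4$ with internal angles $\pi/m_3,2\pi/m_2,\pi/m_3,2\pi/m_1$ respectively; $r_i$ denotes the side meeting $v_i$ at its right (facing inward); the side-pairing generators $T_i\in\Gamma$ satisfy $T_1(r_1)=r_2$, $T_2(r_2)=r_1$, $T_3(r_3)=r_4$, $T_4(r_4)=r_3$, $T_1(v_1)=v_3$, $T_3(v_3)=v_1$, $T_2(v_2)=v_2$, $T_4(v_4)=v_4$, with $T_2T_1=T_1T_2=T_4T_3=T_3T_4=I$; the elliptic cycles are $\{v_1,v_3\}$, $\{v_2\}$, $\{v_4\}$ with stabiliser orders $m_3,m_2,m_1$. *)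

theory Defs
  imports "HOL-Analysis.Analysis"
begin

definition disc :: "complex set" where
  "disc = {z. cmod z < 1}"

text \<open>Orientation-preserving isometries of the disc: z maps to (a z + b)/(conj b z + conj a)
  with |a|^2 - |b|^2 = 1.  As HOL functions they act by this formula on the disc
  and (by convention) as the identity off the disc, so that composition of
  functions is the group law.\<close>
definition disc_aut :: "(complex \<Rightarrow> complex) \<Rightarrow> bool" where
  "disc_aut f \<longleftrightarrow> (\<exists>a b. (cmod a)^2 - (cmod b)^2 = 1 \<and>
      (\<forall>z. f z = (if z \<in> disc then (a * z + b) / (cnj b * z + cnj a) else z)))"

definition to0 :: "complex \<Rightarrow> complex \<Rightarrow> complex" where
  "to0 p z = (z - p) / (1 - cnj p * z)"

definition from0 :: "complex \<Rightarrow> complex \<Rightarrow> complex" where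
  "from0 p z = (z + p) / (1 + cnj p * z)"

definition hseg :: "complex \<Rightarrow> complex \<Rightarrow> complex set" where
  "hseg p q = {from0 p (complex_of_real t * to0 p q) | t. 0 \<le> t \<and> t \<le> 1}"

definition hline :: "complex \<Rightarrow> complex \<Rightarrow> complex set" where
  "hline p q = {from0 p (complex_of_real t * to0 p q) | t. cmod (complex_of_real t * to0 p q) < 1}"

text \<open>Hyperbolic angle at v between the geodesics from v to w1 and from v to w2
  (a value in [0, pi]); the model is conformal and to0 v has positive real derivative at v.\<close>
definition hangle :: "complex \<Rightarrow> complex \<Rightarrow> complex \<Rightarrow> real" where
  "hangle v w1 w2 = arccos (Re (to0 v w1 * cnj (to0 v w2)) / (cmod (to0 v w1) * cmod (to0 v w2)))"

definition hconvex :: "complex set \<Rightarrow> bool" where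
  "hconvex S \<longleftrightarrow> (\<forall>p\<in>S. \<forall>q\<in>S. hseg p q \<subseteq> S)"

definition disc_group :: "(complex \<Rightarrow> complex) set \<Rightarrow> bool" where
  "disc_group G \<longleftrightarrow> (\<forall>f\<in>G. disc_aut f) \<and> id \<in> G \<and> (\<forall>f\<in>G. \<forall>g\<in>G. f \<circ> g \<in> G)
     \<and> (\<forall>f\<in>G. \<exists>g\<in>G. g \<circ> f = id)"

text \<open>Fuchsian: discrete, equivalently acting properly discontinuously on the disc.\<close>
definition fuchsian :: "(complex \<Rightarrow> complex) set \<Rightarrow> bool" where
  "fuchsian G \<longleftrightarrow> disc_group G \<and>
     (\<forall>K. compact K \<and> K \<subseteq> disc \<longrightarrow> finite {g\<in>G. g ` K \<inter> K \<noteq> {}})"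

definition cocompact :: "(complex \<Rightarrow> complex) set \<Rightarrow> bool" where
  "cocompact G \<longleftrightarrow> (\<exists>K. compact K \<and> K \<subseteq> disc \<and> (\<Union>g\<in>G. g ` K) = disc)"

text \<open>The subgroup generated by A and B (the monoid generated suffices here as
  A and B have finite order, but we close under inverses anyway).\<close>
definition generated_by :: "(complex \<Rightarrow> complex) set \<Rightarrow> (complex \<Rightarrow> complex) \<Rightarrow> (complex \<Rightarrow> complex) \<Rightarrow> bool" where
  "generated_by G A B \<longleftrightarrow> A \<in> G \<and> B \<in> G \<and>
     (\<forall>S. A \<in> S \<and> B \<in> S \<and> id \<in> S \<and> (\<forall>f\<in>S. \<forall>g\<in>S. f \<circ> g \<in> S)
          \<and> (\<forall>f\<in>S. \<forall>g\<in>G. g \<circ> f = id \<longrightarrow> g \<in> S) \<longrightarrow> G \<subseteq> S)"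

definition fundamental_domain :: "(complex \<Rightarrow> complex) set \<Rightarrow> complex set \<Rightarrow> bool" where
  "fundamental_domain G F \<longleftrightarrow> F \<subseteq> disc \<and> closed F \<and> interior F \<noteq> {} \<and>
     (\<Union>g\<in>G. g ` F) = disc \<and>
     (\<forall>g\<in>G. g \<noteq> id \<longrightarrow> g ` (interior F) \<inter> interior F = {})"

end

theory Submission
  imports Defs
begin


lemma mob_norm_id:
  "(cmod (1 + cnj p * z))^2 - (cmod (z + p))^2 = (1 - (cmod p)^2) * (1 - (cmod z)^2)"
  unfolding cmod_power2 by (simp add: algebra_simps power2_eq_square)

lemma from0_den_nz: "cmod p < 1 \<Longrightarrow> cmod z < 1 \<Longrightarrow> 1 + cnj p * z \<noteq> 0"
proof
  assume "cmod p < 1" "cmod z < 1" "1 + cnj p * z = 0"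
  then have "cnj p * z = -1" by (simp add: add_eq_0_iff)
  then have "cmod (cnj p * z) = 1" by simp
  moreover have "cmod (cnj p * z) < 1" using \<open>cmod p < 1\<close> \<open>cmod z < 1\<close>
    by (simp add: norm_mult) (metis mult_strict_mono' norm_ge_zero mult_1_left)
  ultimately show False by simp
qed

lemma from0_disc: assumes "cmod p < 1" "cmod z < 1" shows "cmod (from0 p z) < 1"
proof -
  have d: "1 + cnj p * z \<noteq> 0" using from0_den_nz assms .
  have "(1 - (cmod p)^2) * (1 - (cmod z)^2) > 0"
    using assms by (intro mult_pos_pos) (simp_all add: abs_square_less_1)
  then have "(cmod (z + p))^2 < (cmod (1 + cnj p * z))^2" using mob_norm_id[of p z] by linarith
  then have "cmod (z + p) < cmod (1 + cnj p * z)" by (simp add: power2_less_imp_less)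
  then show ?thesis using d by (simp add: from0_def norm_divide divide_less_eq)
qed

lemma to0_from0: "to0 p z = from0 (-p) z"
  by (simp add: to0_def from0_def)

lemma to0_disc: "cmod p < 1 \<Longrightarrow> cmod z < 1 \<Longrightarrow> cmod (to0 p z) < 1"
  by (simp add: to0_from0 from0_disc)

lemma cnj_p_p: "cmod p < 1 \<Longrightarrow> cnj p * p \<noteq> 1"
proof
  assume "cmod p < 1" "cnj p * p = 1"
  then have "cmod (cnj p * p) = 1" by simp
  moreover have "cmod (cnj p * p) < 1" using \<open>cmod p < 1\<close>
    by (simp add: norm_mult) (metis mult_strict_mono' norm_ge_zero mult_1_left)
  ultimately show False by simp
qed

lemma frac_aux: "(d::complex) \<noteq> 0 \<Longrightarrow> (a/d - p)/(1 - q*(a/d)) = (a - p*d)/(d - q*a)"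
proof -
  assume d: "d \<noteq> 0"
  have 1: "a/d - p = (a - p*d)/d" using d by (simp add: field_simps)
  have 2: "1 - q*(a/d) = (d - q*a)/d" using d by (simp add: field_simps)
  show ?thesis unfolding 1 2 using d by simp
qed

lemma to0_from0_inv: assumes "cmod p < 1" "cmod z < 1" shows "to0 p (from0 p z) = z"
proof -
  have d: "1 + cnj p * z \<noteq> 0" using from0_den_nz assms .
  have pp: "cnj p * p \<noteq> 1" using cnj_p_p assms(1) .
  have e: "1 + cnj p * z - cnj p * (z + p) = 1 - cnj p * p" by (simp add: algebra_simps)
  have e2: "z + p - p * (1 + cnj p * z) = z * (1 - cnj p * p)" by (simp add: algebra_simps)
  have "to0 p (from0 p z) = (z + p - p * (1 + cnj p * z)) / (1 + cnj p * z - cnj p * (z + p))"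
    unfolding to0_def from0_def using frac_aux[OF d] by simp
  also have "\<dots> = z" using pp by (simp only: e e2) simp
  finally show ?thesis .
qed

lemma from0_to0_inv: assumes "cmod p < 1" "cmod z < 1" shows "from0 p (to0 p z) = z"
  using to0_from0_inv[of "-p" z] assms by (simp add: to0_from0 fun_eq_iff from0_def to0_def)

lemma to0_den_nz: "cmod p < 1 \<Longrightarrow> cmod z < 1 \<Longrightarrow> 1 - cnj p * z \<noteq> 0"
  using from0_den_nz[of "-p" z] by simp

lemma mob_comp:
  assumes c: "cmod c < 1" and p: "cmod p < 1" and z: "cmod z < 1"
  shows "to0 c (from0 p z) = from0 (to0 c p) (((1 - c * cnj p) / (1 - cnj c * p)) * z)"
proof -
  have d: "1 + cnj p * z \<noteq> 0" using from0_den_nz p z .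
  have d1: "1 - cnj c * p \<noteq> 0" using to0_den_nz c p .
  have d2: "1 - c * cnj p \<noteq> 0" using to0_den_nz[of p c] c p by (simp add: mult.commute)
  define N where "N = (1 - c * cnj p) * z + (p - c)"
  define D where "D = (1 - cnj c * p) + (cnj p - cnj c) * z"
  have "to0 c (from0 p z) = ((z + p) - c * (1 + cnj p * z)) / ((1 + cnj p * z) - cnj c * (z + p))"
    unfolding to0_def from0_def using frac_aux[OF d] by simp
  also have "\<dots> = N / D" unfolding N_def D_def by (simp add: algebra_simps)
  finally have L: "to0 c (from0 p z) = N / D" .
  have n0: "((1 - c * cnj p) / (1 - cnj c * p)) * z + to0 c p
      = ((1 - c * cnj p) * z) / (1 - cnj c * p) + (p - c) / (1 - cnj c * p)"
    by (simp add: to0_def)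
  have n: "((1 - c * cnj p) / (1 - cnj c * p)) * z + to0 c p = N / (1 - cnj c * p)"
    unfolding n0 N_def by (simp add: add_divide_distrib)
  have cj: "cnj (to0 c p) = (cnj p - cnj c) / (1 - c * cnj p)"
    by (simp add: to0_def)
  have dd0: "cnj (to0 c p) * (((1 - c * cnj p) / (1 - cnj c * p)) * z) = ((cnj p - cnj c) * z) / (1 - cnj c * p)"
    unfolding cj using d2 by simp
  have dd: "1 + cnj (to0 c p) * (((1 - c * cnj p) / (1 - cnj c * p)) * z) = D / (1 - cnj c * p)"
    unfolding dd0 D_def using d1 by (simp add: add_divide_distrib)
  have R: "from0 (to0 c p) (((1 - c * cnj p) / (1 - cnj c * p)) * z) = N / D"
    unfolding from0_def n dd using d1 by simp
  show ?thesis using L R by simp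
qed

lemma lam_norm: assumes c: "cmod c < 1" and p: "cmod p < 1"
  shows "cmod ((1 - c * cnj p) / (1 - cnj c * p)) = 1"
proof -
  have d1: "1 - cnj c * p \<noteq> 0" using to0_den_nz c p .
  have "1 - c * cnj p = cnj (1 - cnj c * p)" by simp
  then have "cmod (1 - c * cnj p) = cmod (1 - cnj c * p)" by (metis complex_mod_cnj)
  then show ?thesis using d1 by (simp add: norm_divide)
qed

lemma rot_from0: assumes k: "cmod k = 1"
  shows "k * from0 (cnj k * c) y = from0 c (k * y)"
proof -
  have kk: "k * cnj k = 1" using k by (metis complex_norm_square norm_one power2_eq_1_iff abs_of_nonneg norm_ge_zero one_power2 complex_mod_mult_cnj mult.commute complex_mult_cnj of_real_1)
  have "k * from0 (cnj k * c) y = (k * y + (k * cnj k) * c) / (1 + k * cnj c * y)"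
    unfolding from0_def by (simp add: algebra_simps)
  also have "\<dots> = from0 c (k * y)" unfolding kk from0_def by (simp add: algebra_simps)
  finally show ?thesis .
qed

lemma disc_iff: "z \<in> disc \<longleftrightarrow> cmod z < 1" by (simp add: disc_def)

lemma stab_rot:
  assumes g: "disc_aut g" and c: "cmod c < 1" and gc: "g c = c"
  shows "\<exists>\<omega>. cmod \<omega> = 1 \<and> (\<forall>w. cmod w < 1 \<longrightarrow> g (from0 c w) = from0 c (\<omega> * w))"
proof -
  obtain a b where ab: "(cmod a)^2 - (cmod b)^2 = 1"
    and gf: "\<And>z. g z = (if z \<in> disc then (a * z + b) / (cnj b * z + cnj a) else z)"
    using g unfolding disc_aut_def by blast
  have a0: "a \<noteq> 0" using ab by (auto simp: power2_eq_square) (smt (verit) mult_nonneg_nonneg norm_ge_zero)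
  have ca0: "cnj a \<noteq> 0" using a0 by simp
  define d where "d = b / a"
  define k where "k = a / cnj a"
  have k1: "cmod k = 1" using a0 by (simp add: k_def norm_divide)
  have "(cmod b)^2 < (cmod a)^2" using ab by linarith
  then have "cmod b < cmod a" by (simp add: power2_less_imp_less)
  then have dn: "cmod d < 1" using a0 by (simp add: d_def norm_divide divide_less_eq)
  have gk: "g z = k * from0 d z" if "cmod z < 1" for z
  proof -
    have "g z = (a * z + b) / (cnj b * z + cnj a)" using gf that by (simp add: disc_def)
    also have "\<dots> = k * from0 d z"
    proof -
      have 1: "z + d = (a*z+b)/a" unfolding d_def using a0 by (simp add: field_simps)
      have 2: "1 + cnj d * z = (cnj b * z + cnj a)/cnj a" unfolding d_def using ca0 by (simp add: field_simps)
      show ?thesis unfolding from0_def 1 2 k_def using a0 ca0 by simp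
    qed
    finally show ?thesis .
  qed
  define lam where "lam = (1 - (-d) * cnj c) / (1 - cnj (-d) * c)"
  have lam1: "cmod lam = 1" unfolding lam_def using lam_norm[of "-d" c] dn c by simp
  have kc: "k * to0 (-d) c = c" using gk[OF c] gc by (simp add: to0_from0)
  have kk: "cnj k * k = 1" using k1 by (metis complex_norm_square norm_one power2_eq_1_iff abs_of_nonneg norm_ge_zero one_power2 complex_mod_mult_cnj mult.commute complex_mult_cnj of_real_1)
  have e: "to0 (-d) c = cnj k * c"
  proof -
    have "cnj k * (k * to0 (-d) c) = cnj k * c" using kc by simp
    then show ?thesis using kk by (simp add: mult.assoc[symmetric])
  qed
  show ?thesis
  proof (intro exI conjI allI impI)
    show "cmod (k * lam) = 1" using k1 lam1 by (simp add: norm_mult)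
    fix w :: complex assume w: "cmod w < 1"
    have fw: "cmod (from0 c w) < 1" using from0_disc c w .
    have "g (from0 c w) = k * to0 (-d) (from0 c w)" using gk[OF fw] by (simp add: to0_from0)
    also have "\<dots> = k * from0 (to0 (-d) c) (lam * w)"
      using mob_comp[of "-d" c w] dn c w by (simp add: lam_def)
    also have "\<dots> = from0 c (k * (lam * w))" unfolding e using rot_from0[OF k1] by simp
    finally show "g (from0 c w) = from0 c (k * lam * w)" by (simp add: mult.assoc)
  qed
qed

lemma cnj_mult_self: "cnj v * v = complex_of_real ((cmod v)^2)"
  by (metis complex_norm_square mult.commute)

lemma to0_swap: assumes "cmod p < 1" "cmod q < 1"
  shows "((1 - p * cnj q) / (1 - cnj p * q)) * to0 q p = - to0 p q"
proof -
  have d1: "1 - cnj p * q \<noteq> 0" using to0_den_nz assms by simp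
  have d2: "1 - cnj q * p \<noteq> 0" using to0_den_nz assms by simp
  have e: "1 - cnj q * p = 1 - p * cnj q" by (simp add: mult.commute)
  have d3: "1 - p * cnj q \<noteq> 0" using d2 e by simp
  have "((1 - p * cnj q) / (1 - cnj p * q)) * to0 q p = ((1 - p * cnj q) / (1 - cnj p * q)) * ((p - q) / (1 - p * cnj q))"
    unfolding to0_def e ..
  also have "\<dots> = (p - q) / (1 - cnj p * q)" using d3 by simp
  also have "\<dots> = - to0 p q" unfolding to0_def by (simp add: minus_divide_left)
  finally show ?thesis .
qed

lemma from0_neg_self: assumes "cmod v < 1"
  shows "from0 v (complex_of_real (- t) * v) = complex_of_real ((1 - t) / (1 - t * (cmod v)^2)) * v"
proof -
  have "from0 v (complex_of_real (- t) * v) = ((1 - t) * v) / (1 - t * (cnj v * v))"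
    unfolding from0_def by (simp add: algebra_simps)
  also have "\<dots> = ((1 - t) * v) / complex_of_real (1 - t * (cmod v)^2)"
    unfolding cnj_mult_self by simp
  also have "\<dots> = complex_of_real ((1 - t) / (1 - t * (cmod v)^2)) * v"
    by (simp add: field_simps)
  finally show ?thesis .
qed

lemma rev_point:
  assumes p: "cmod p < 1" and q: "cmod q < 1" and t: "cmod (complex_of_real t * to0 q p) < 1"
  shows "from0 q (complex_of_real t * to0 q p)
       = from0 p (complex_of_real ((1 - t) / (1 - t * (cmod (to0 p q))^2)) * to0 p q)
     \<and> to0 p (from0 q (complex_of_real t * to0 q p)) = complex_of_real ((1 - t) / (1 - t * (cmod (to0 p q))^2)) * to0 p q"
    (is "?x = from0 p (complex_of_real ?r * ?v) \<and> _")
proof -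
  have "to0 p ?x = from0 (to0 p q) (((1 - p * cnj q) / (1 - cnj p * q)) * (complex_of_real t * to0 q p))"
    using mob_comp[OF p q t] .
  also have "((1 - p * cnj q) / (1 - cnj p * q)) * (complex_of_real t * to0 q p) = complex_of_real (-t) * ?v"
  proof -
    have "((1 - p * cnj q) / (1 - cnj p * q)) * (complex_of_real t * to0 q p)
        = complex_of_real t * (((1 - p * cnj q) / (1 - cnj p * q)) * to0 q p)" by (simp add: ac_simps)
    also have "\<dots> = complex_of_real (-t) * ?v" using to0_swap[OF p q] by simp
    finally show ?thesis .
  qed
  also have "from0 ?v (complex_of_real (-t) * ?v) = complex_of_real ?r * ?v"
    using from0_neg_self[OF to0_disc[OF p q]] .
  finally have e: "to0 p ?x = complex_of_real ?r * ?v" .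
  have "cmod ?x < 1" using from0_disc q t .
  then have "?x = from0 p (to0 p ?x)" using from0_to0_inv p by simp
  then show ?thesis using e by simp
qed

lemma hseg_sub: assumes p: "cmod p < 1" and q: "cmod q < 1" shows "hseg q p \<subseteq> hseg p q"
proof
  fix x assume "x \<in> hseg q p"
  then obtain t where t: "0 \<le> t" "t \<le> 1" and x: "x = from0 q (complex_of_real t * to0 q p)"
    unfolding hseg_def by blast
  define k where "k = (cmod (to0 p q))^2"
  have k: "0 \<le> k" "k < 1" unfolding k_def using to0_disc[OF p q]
    by (simp_all add: abs_square_less_1)
  have tn: "cmod (complex_of_real t * to0 q p) < 1"
  proof -
    have "cmod (complex_of_real t * to0 q p) = t * cmod (to0 q p)" using t by (simp add: norm_mult)
    also have "\<dots> \<le> 1 * cmod (to0 q p)" using t by (intro mult_right_mono) auto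
    finally show ?thesis using to0_disc[OF q p] by simp
  qed
  have "x = from0 p (complex_of_real ((1 - t) / (1 - t * k)) * to0 p q)"
    unfolding x k_def using rev_point[OF p q tn] by (rule conjunct1)
  moreover have "0 \<le> (1 - t) / (1 - t * k)" "(1 - t) / (1 - t * k) \<le> 1"
  proof -
    have "t * k \<le> t * 1" using k t by (intro mult_left_mono) auto
    moreover have "t * k \<le> 1 * k" using k t by (intro mult_right_mono) auto
    ultimately have "t * k \<le> t" "t * k < 1" using k by auto
    then show "0 \<le> (1 - t) / (1 - t * k)" "(1 - t) / (1 - t * k) \<le> 1"
      using t by (simp_all add: divide_le_eq_1)
  qed
  ultimately show "x \<in> hseg p q" unfolding hseg_def by blast
qed

lemma hseg_sym: "cmod p < 1 \<Longrightarrow> cmod q < 1 \<Longrightarrow> hseg p q = hseg q p"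
  using hseg_sub by blast

lemma hline_sub: assumes p: "cmod p < 1" and q: "cmod q < 1" shows "hline q p \<subseteq> hline p q"
proof
  fix x assume "x \<in> hline q p"
  then obtain t where tn: "cmod (complex_of_real t * to0 q p) < 1" and x: "x = from0 q (complex_of_real t * to0 q p)"
    unfolding hline_def by blast
  define r where "r = (1 - t) / (1 - t * (cmod (to0 p q))^2)"
  have x2: "x = from0 p (complex_of_real r * to0 p q)"
    unfolding x r_def using rev_point[OF p q tn] by (rule conjunct1)
  have "cmod x < 1" using from0_disc q tn x by simp
  then have "cmod (to0 p x) < 1" using to0_disc p by simp
  moreover have "to0 p x = complex_of_real r * to0 p q"
    unfolding x r_def using rev_point[OF p q tn] by (rule conjunct2)
  ultimately show "x \<in> hline p q" unfolding hline_def using x2 by auto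
qed

lemma hline_sym: "cmod p < 1 \<Longrightarrow> cmod q < 1 \<Longrightarrow> hline p q = hline q p"
  using hline_sub by blast

lemma hangle_sym: "hangle v a b = hangle v b a"
  unfolding hangle_def by (simp add: mult.commute)

lemma hangle_seg:
  assumes p: "cmod p < 1" and q: "cmod q < 1" and t: "0 \<le> t" "t \<le> 1"
    and x: "x = from0 p (complex_of_real t * to0 p q)" and xp: "x \<noteq> p"
  shows "hangle p q x = 0"
proof -
  define v where "v = to0 p q"
  have vn: "cmod v < 1" unfolding v_def using to0_disc p q .
  have tn: "cmod (complex_of_real t * v) < 1"
  proof -
    have "cmod (complex_of_real t * v) = t * cmod v" using t by (simp add: norm_mult)
    also have "\<dots> \<le> 1 * cmod v" using t by (intro mult_right_mono) auto
    finally show ?thesis using vn by simp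
  qed
  have e: "to0 p x = complex_of_real t * v" unfolding x v_def using to0_from0_inv p tn v_def by simp
  have nz: "complex_of_real t * v \<noteq> 0"
  proof
    assume "complex_of_real t * v = 0"
    then have "x = from0 p 0" using x v_def by metis
    then show False using xp by (simp add: from0_def)
  qed
  then have t0: "t > 0" and v0: "v \<noteq> 0" using t by auto
  have "Re (v * cnj (complex_of_real t * v)) = t * (cmod v)^2"
    unfolding cmod_power2 by (simp add: power2_eq_square algebra_simps)
  moreover have "cmod v * cmod (complex_of_real t * v) = t * (cmod v)^2"
    using t0 by (simp add: norm_mult power2_eq_square)
  ultimately show ?thesis unfolding hangle_def e v_def[symmetric] using t0 v0 by simp
qed

lemma unit_cos: assumes "cmod z = 1" "Re z = cos a" shows "z = cis a \<or> z = cis (-a)"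
proof -
  have "(Re z)^2 + (Im z)^2 = 1" using assms(1) cmod_power2[of z] by simp
  then have h: "(cos a)^2 + (Im z)^2 = 1" using assms(2) by simp
  then have "(Im z)^2 = (sin a)^2" using sin_cos_squared_add[of a] by linarith
  then have "Im z = sin a \<or> Im z = - sin a" by (metis power2_eq_iff)
  then show ?thesis using assms(2) by (auto intro: complex_eqI)
qed

lemma angle_param: assumes "cmod v = 1" "sg = 1 \<or> sg = (-1::real)"
  shows "\<exists>t. 0 \<le> t \<and> t < 2 * pi \<and> v = cis (sg * t)"
proof -
  have v0: "v \<noteq> 0" using assms by auto
  have sv: "sgn v = v" using assms(1) by (simp add: sgn_div_norm)
  define a where "a = Arg v"
  have va: "v = cis a" unfolding a_def using cis_Arg[OF v0] sv by simp
  have ab: "- pi < a" "a \<le> pi" unfolding a_def using Arg_bounded by auto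
  define b where "b = sg * a"
  have sb: "sg * b = a" unfolding b_def using assms(2) by auto
  have bb: "- pi \<le> b" "b \<le> pi" unfolding b_def using assms(2) ab by auto
  show ?thesis
  proof (cases "0 \<le> b")
    case True
    have "b < 2 * pi" using bb pi_gt_zero by linarith
    then show ?thesis using True va sb by (intro exI[of _ b]) auto
  next
    case False
    have "cis (sg * (b + 2 * pi)) = cis (a + sg * (2 * pi))" using sb by (simp add: algebra_simps)
    also have "\<dots> = cis a" using assms(2)
    proof
      assume "sg = 1" then show ?thesis by (simp add: cis_mult[symmetric])
    next
      assume "sg = -1" then show ?thesis by (simp add: cis_divide[symmetric])
    qed
    finally show ?thesis using False bb va by (intro exI[of _ "b + 2 * pi"]) auto
  qed
qed

lemma cis_real_cos1: assumes "cis x = complex_of_real r" "0 \<le> r" shows "cos x = 1"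
proof -
  have "sin x = 0" using arg_cong[OF assms(1), of Im] by simp
  then have "(cos x)^2 = 1" using sin_cos_squared_add[of x] by simp
  moreover have "cos x \<ge> 0" using arg_cong[OF assms(1), of Re] assms(2) by simp
  ultimately show ?thesis by (metis abs_of_nonneg power2_eq_1_iff abs_neg_one abs_one)
qed

lemma cos1_small: assumes "cos x = 1" "\<bar>x\<bar> < 2 * pi" shows "x = 0"
proof -
  obtain n :: int where n: "x = real_of_int n * 2 * pi" using assms(1) cos_one_2pi_int by meson
  then have "\<bar>real_of_int n\<bar> * (2 * pi) < 1 * (2 * pi)" using assms(2) by (simp add: abs_mult)
  then have "\<bar>real_of_int n\<bar> < 1" by (simp only: mult_less_cancel_right) simp
  then have "n = 0" by linarith
  then show ?thesis using n by simp
qed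

lemma disc_aut_off: "disc_aut g \<Longrightarrow> z \<notin> disc \<Longrightarrow> g z = z"
  unfolding disc_aut_def by auto

lemma rot_unique:
  assumes c: "cmod c < 1" and a: "cmod a = 1" and b: "cmod b = 1"
    and h: "\<forall>w. cmod w < 1 \<longrightarrow> from0 c (a * w) = from0 c (b * w)"
  shows "a = b"
proof -
  have "from0 c (a * (1/2)) = from0 c (b * (1/2))" using h[rule_format, of "1/2"] by simp
  then have "to0 c (from0 c (a * (1/2))) = to0 c (from0 c (b * (1/2)))" by simp
  then have "a * (1/2) = b * (1/2)" using to0_from0_inv[OF c] a b by (simp add: norm_mult norm_divide)
  then show ?thesis by simp
qed

lemma stab_roots:
  assumes dg: "disc_group G" and c: "cmod c < 1" and card: "card {g\<in>G. g c = c} = m"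
    and m: "m \<ge> 1" and z: "z ^ m = 1"
  shows "\<exists>g\<in>G. g c = c \<and> (\<forall>w. cmod w < 1 \<longrightarrow> g (from0 c w) = from0 c (z * w))"
proof -
  define S where "S = {g\<in>G. g c = c}"
  have fin: "finite S" using card m unfolding S_def by (metis card.infinite not_one_le_zero)
  define R where "R = (\<lambda>g \<omega>. cmod \<omega> = 1 \<and> (\<forall>w. cmod w < 1 \<longrightarrow> g (from0 c w) = from0 c (\<omega> * w)))"
  define f where "f = (\<lambda>g. SOME \<omega>. R g \<omega>)"
  have aut: "disc_aut g" if "g \<in> G" for g using dg that unfolding disc_group_def by blast
  have Rf: "R g (f g)" if "g \<in> S" for g
  proof -
    have "\<exists>\<omega>. R g \<omega>" using stab_rot[OF aut c] that unfolding S_def R_def by blast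
    then show ?thesis unfolding f_def by (rule someI_ex)
  qed
  have Runiq: "\<omega> = f g" if "g \<in> S" "R g \<omega>" for g \<omega>
    using rot_unique[OF c] Rf[OF that(1)] that(2) unfolding R_def by metis
  have inj: "inj_on f S"
  proof
    fix g h assume g: "g \<in> S" and h: "h \<in> S" and e: "f g = f h"
    show "g = h"
    proof
      fix x show "g x = h x"
      proof (cases "x \<in> disc")
        case True
        then have x: "cmod x < 1" by (simp add: disc_def)
        have "x = from0 c (to0 c x)" using from0_to0_inv[OF c x] by simp
        moreover have "cmod (to0 c x) < 1" using to0_disc[OF c x] .
        ultimately show ?thesis using Rf[OF g] Rf[OF h] e unfolding R_def by metis
      next
        case False
        have "g x = x" "h x = x" using disc_aut_off[OF aut False] g h unfolding S_def by auto
        then show ?thesis by simp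
      qed
    qed
  qed
  define H where "H = f ` S"
  have cardH: "card H = m" unfolding H_def using card_image[OF inj] card S_def by simp
  have finH: "finite H" unfolding H_def using fin by simp
  have unitH: "cmod \<omega> = 1" if "\<omega> \<in> H" for \<omega> using that Rf unfolding H_def R_def by auto
  have mulH: "\<omega>1 * \<omega>2 \<in> H" if om12: "\<omega>1 \<in> H" "\<omega>2 \<in> H" for \<omega>1 \<omega>2
  proof -
    obtain g h where g: "g \<in> S" "\<omega>1 = f g" and h: "h \<in> S" "\<omega>2 = f h"
      using om12 unfolding H_def by blast
    have gh: "g \<circ> h \<in> S" using g h dg unfolding S_def disc_group_def by auto
    have "R (g \<circ> h) (\<omega>1 * \<omega>2)"
      unfolding R_def
    proof (intro conjI allI impI)
      show "cmod (\<omega>1 * \<omega>2) = 1" using unitH om12 by (simp add: norm_mult)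
      fix w :: complex assume w: "cmod w < 1"
      have w2: "cmod (\<omega>2 * w) < 1" using w unitH[OF om12(2)] by (simp add: norm_mult)
      have "(g \<circ> h) (from0 c w) = g (from0 c (\<omega>2 * w))" using Rf[OF h(1)] h(2) w unfolding R_def by simp
      also have "\<dots> = from0 c (\<omega>1 * (\<omega>2 * w))" using Rf[OF g(1)] g(2) w2 unfolding R_def by simp
      finally show "(g \<circ> h) (from0 c w) = from0 c (\<omega>1 * \<omega>2 * w)" by (simp add: mult.assoc)
    qed
    then have "\<omega>1 * \<omega>2 = f (g \<circ> h)" using Runiq[OF gh] by blast
    then show ?thesis unfolding H_def using gh by blast
  qed
  have pow: "\<omega> ^ m = 1" if om: "\<omega> \<in> H" for \<omega>
  proof -
    have om0: "\<omega> \<noteq> 0" using unitH[OF om] by auto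
    have injm: "inj_on (\<lambda>x. \<omega> * x) H" using om0 by (auto intro: inj_onI)
    have sub: "(\<lambda>x. \<omega> * x) ` H \<subseteq> H" using mulH om by auto
    have eq: "(\<lambda>x. \<omega> * x) ` H = H"
      using card_subset_eq[OF finH sub] card_image[OF injm] by simp
    have "prod (\<lambda>x. x) H = prod (\<lambda>x. x) ((\<lambda>x. \<omega> * x) ` H)" using eq by simp
    also have "\<dots> = prod (\<lambda>x. \<omega> * x) H" using prod.reindex[OF injm] by simp
    also have "\<dots> = \<omega> ^ card H * prod (\<lambda>x. x) H" by (simp add: prod.distrib)
    finally have "1 * prod (\<lambda>x. x) H = \<omega> ^ m * prod (\<lambda>x. x) H" using cardH by simp
    moreover have "prod (\<lambda>x. x) H \<noteq> 0" using finH unitH by (auto simp: prod_zero_iff) (metis norm_zero zero_neq_one)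
    ultimately show ?thesis by (metis mult_cancel_right)
  qed
  have "H = {z. z ^ m = 1}"
  proof (rule card_subset_eq)
    show "finite {z::complex. z ^ m = 1}" using m by (intro finite_roots_unity) auto
    show "H \<subseteq> {z. z ^ m = 1}" using pow by auto
    show "card H = card {z::complex. z ^ m = 1}" using cardH card_roots_unity_eq[of m] m by simp
  qed
  then have "z \<in> H" using z by simp
  then obtain g where g: "g \<in> S" "z = f g" unfolding H_def by blast
  then show ?thesis using Rf[OF g(1)] unfolding R_def S_def by auto
qed

lemma div_abs_le1: "0 < (P::real) \<Longrightarrow> \<bar>R\<bar> \<le> P \<Longrightarrow> \<bar>R / P\<bar> \<le> 1"
  by (simp add: abs_divide divide_le_eq)

lemma ratio_bound: "\<bar>Re (a * cnj b) / (cmod a * cmod b)\<bar> \<le> 1"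
proof (cases "cmod a * cmod b = 0")
  case True then show ?thesis unfolding True by simp
next
  case False
  then have pos: "cmod a * cmod b > 0" by (simp add: less_le)
  have "\<bar>Re (a * cnj b)\<bar> \<le> cmod (a * cnj b)" by (rule abs_Re_le_cmod)
  also have "\<dots> = cmod a * cmod b" by (simp add: norm_mult)
  finally show ?thesis by (rule div_abs_le1[OF pos])
qed

lemma hangle_zero_pi2: "to0 c p = 0 \<or> to0 c q = 0 \<Longrightarrow> hangle c p q = pi / 2"
  unfolding hangle_def by auto

lemma hangle_cos: assumes "hangle c p q = x"
  shows "Re (to0 c p * cnj (to0 c q)) / (cmod (to0 c p) * cmod (to0 c q)) = cos x"
proof -
  define y where "y = Re (to0 c p * cnj (to0 c q)) / (cmod (to0 c p) * cmod (to0 c q))"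
  have "\<bar>y\<bar> \<le> 1" unfolding y_def by (rule ratio_bound)
  then have "cos (arccos y) = y" by (intro cos_arccos) (auto simp: abs_le_iff)
  then show ?thesis using assms unfolding hangle_def y_def[symmetric] by simp
qed

lemma cis_pow_pi: assumes "m \<ge> (1::nat)" shows "cis (pi / real m) ^ m = -1" "cis (- (pi / real m)) ^ m = -1"
proof -
  have h: "real m * (pi / real m) = pi" using assms by simp
  have h2: "real m * (- (pi / real m)) = - pi" using assms by simp
  show "cis (pi / real m) ^ m = -1" by (subst Complex.DeMoivre, subst h, simp)
  show "cis (- (pi / real m)) ^ m = -1" by (subst Complex.DeMoivre, subst h2, simp add: complex_eq_iff)
qed

lemma pi_div_eq: assumes "pi / real m = pi / 2" shows "m = 2"
proof -
  have "real m = 2" using assms divide_cancel_left[of pi "real m" 2] pi_neq_zero by blast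
  then show ?thesis by simp
qed

lemma transfer:
  assumes dg: "disc_group G" and c: "cmod c < 1" and q1: "cmod q1 < 1" and q2: "cmod q2 < 1"
    and card: "card {g\<in>G. g c = c} = m" and odd: "odd m" and ang: "hangle c q2 q1 = pi / real m"
    and x: "x \<in> hline c q1" and h: "h \<in> G" and xh: "x \<in> h ` interior F"
  shows "hline c q2 \<inter> (\<Union>g\<in>G. g ` interior F) \<noteq> {}"
proof -
  have m1: "m \<ge> 1" using odd by (cases m) auto
  have m2: "m \<noteq> 2" using odd by auto
  define a where "a = to0 c q2"
  define b where "b = to0 c q1"
  have ab0: "a \<noteq> 0" "b \<noteq> 0"
    using hangle_zero_pi2[of c q2 q1] ang pi_div_eq m2 unfolding a_def b_def by force+
  have na: "cmod a > 0" "cmod b > 0" using ab0 by auto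
  define e where "e = a * cnj b / complex_of_real (cmod a * cmod b)"
  have e1: "cmod e = 1" unfolding e_def using na by (simp add: norm_mult norm_divide)
  have eRe: "Re e = cos (pi / real m)"
    using hangle_cos[OF ang] unfolding e_def a_def[symmetric] b_def[symmetric]
    by (simp add: Re_divide_of_real)
  have em: "e ^ m = -1"
  proof -
    from unit_cos[OF e1 eRe] show ?thesis
    proof
      assume "e = cis (pi / real m)"
      then show ?thesis using cis_pow_pi[OF m1] by simp
    next
      assume "e = cis (- (pi / real m))"
      then show ?thesis using cis_pow_pi[OF m1] by simp
    qed
  qed
  define z where "z = - e"
  have zm: "z ^ m = 1" unfolding z_def using em odd by (simp add: power_minus_odd)
  obtain g where g: "g \<in> G" "g c = c" and gr: "\<forall>w. cmod w < 1 \<longrightarrow> g (from0 c w) = from0 c (z * w)"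
    using stab_roots[OF dg c card m1 zm] by blast
  obtain t where t: "cmod (complex_of_real t * b) < 1" and xt: "x = from0 c (complex_of_real t * b)"
    using x unfolding hline_def b_def by blast
  define r where "r = - t * cmod b / cmod a"
  have zb: "z * (complex_of_real t * b) = complex_of_real r * a"
  proof -
    have "z * (complex_of_real t * b) = - (complex_of_real t * a * (cnj b * b)) / complex_of_real (cmod a * cmod b)"
      unfolding z_def e_def by (simp add: algebra_simps)
    also have "\<dots> = - (complex_of_real t * a * complex_of_real ((cmod b)^2)) / complex_of_real (cmod a * cmod b)"
      unfolding cnj_mult_self ..
    also have "\<dots> = complex_of_real r * a" unfolding r_def using na
      by (simp add: field_simps power2_eq_square)
    finally show ?thesis .
  qed
  have gx: "g x = from0 c (complex_of_real r * a)" using gr t xt zb by simp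
  have "cmod (complex_of_real r * a) = cmod (z * (complex_of_real t * b))" using zb by simp
  also have "\<dots> = cmod (complex_of_real t * b)" using e1 by (simp add: z_def norm_mult)
  finally have rn: "cmod (complex_of_real r * a) < 1" using t by simp
  have "g x \<in> hline c q2" unfolding hline_def gx a_def using rn a_def by blast
  moreover have "g x \<in> (g \<circ> h) ` interior F" using xh by auto
  moreover have "g \<circ> h \<in> G" using dg g h unfolding disc_group_def by blast
  ultimately show ?thesis by blast
qed

lemma ball01: "ball (0::complex) 1 = {z. cmod z < 1}" by (auto simp: dist_norm)

lemma from0_cont: assumes c: "cmod c < 1" shows "continuous_on (ball 0 1) (from0 c)"
proof -
  have "continuous_on (ball 0 1) (\<lambda>z. (z + c) / (1 + cnj c * z))"
    by (intro continuous_intros) (use from0_den_nz[OF c] in \<open>auto simp: dist_norm\<close>)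
  then show ?thesis unfolding from0_def[abs_def] .
qed

lemma to0_cont: assumes c: "cmod c < 1" shows "continuous_on (ball 0 1) (to0 c)"
proof -
  have "to0 c = from0 (-c)" by (simp add: fun_eq_iff to0_from0)
  then show ?thesis using from0_cont[of "-c"] c by simp
qed

lemma open_from0_image: assumes c: "cmod c < 1" and V: "open V" "V \<subseteq> ball 0 1"
  shows "open (from0 c ` V)"
proof -
  have "from0 c ` V = to0 c -` V \<inter> ball 0 1"
  proof
    show "from0 c ` V \<subseteq> to0 c -` V \<inter> ball 0 1"
    proof
      fix x assume "x \<in> from0 c ` V"
      then obtain v where v: "v \<in> V" "x = from0 c v" by blast
      have vn: "cmod v < 1" using v V(2) by (auto simp: dist_norm)
      show "x \<in> to0 c -` V \<inter> ball 0 1" using v to0_from0_inv[OF c vn] from0_disc[OF c vn]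
        by (auto simp: dist_norm)
    qed
  next
    show "to0 c -` V \<inter> ball 0 1 \<subseteq> from0 c ` V"
    proof
      fix x assume x: "x \<in> to0 c -` V \<inter> ball 0 1"
      then have xn: "cmod x < 1" by (auto simp: dist_norm)
      have "x = from0 c (to0 c x)" using from0_to0_inv[OF c xn] by simp
      then show "x \<in> from0 c ` V" using x by blast
    qed
  qed
  moreover have "open (to0 c -` V \<inter> ball 0 1)"
    using to0_cont[OF c] V(1) continuous_on_open_vimage[of "ball 0 1" "to0 c"] by auto
  ultimately show ?thesis by simp
qed

lemma open_from0_vimage: assumes c: "cmod c < 1" and B: "open B"
  shows "open (from0 c -` B \<inter> ball 0 1)"
  using from0_cont[OF c] B continuous_on_open_vimage[of "ball 0 1" "from0 c"] by auto

lemma hseg_from0: assumes c: "cmod c < 1" and w: "cmod w < 1" and r: "0 \<le> r" "r \<le> 1"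
  shows "from0 c (complex_of_real r * w) \<in> hseg c (from0 c w)"
  unfolding hseg_def using to0_from0_inv[OF c w] r by auto

lemma interior_cone:
  assumes cvx: "hconvex F" and cF: "c \<in> F" and c: "cmod c < 1" and w: "cmod w < 1"
    and wi: "from0 c w \<in> interior F" and r: "0 < r" "r \<le> 1"
  shows "from0 c (complex_of_real r * w) \<in> interior F"
proof -
  define V where "V = from0 c -` interior F \<inter> ball 0 1"
  have oV: "open V" unfolding V_def using open_from0_vimage[OF c] by simp
  have wV: "w \<in> V" unfolding V_def using wi w by (simp add: dist_norm)
  define rV where "rV = (\<lambda>x. r *\<^sub>R x) ` V"
  have orV: "open rV" unfolding rV_def using oV r by (intro open_scaling) auto
  have rVb: "rV \<subseteq> ball 0 1"
  proof
    fix y assume "y \<in> rV"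
    then obtain x where x: "x \<in> V" "y = r *\<^sub>R x" unfolding rV_def by blast
    have "cmod x < 1" using x unfolding V_def by (simp add: dist_norm)
    then have "r * cmod x < 1 * 1" using r by (intro mult_le_less_imp_less) auto
    then show "y \<in> ball 0 1" using x r by (simp add: dist_norm)
  qed
  define W where "W = from0 c ` rV"
  have oW: "open W" unfolding W_def using open_from0_image[OF c orV rVb] .
  have inW: "from0 c (complex_of_real r * w) \<in> W" unfolding W_def rV_def using wV
    by (auto simp: scaleR_conv_of_real)
  have WF: "W \<subseteq> F"
  proof
    fix y assume "y \<in> W"
    then obtain x where x: "x \<in> V" "y = from0 c (complex_of_real r * x)"
      unfolding W_def rV_def by (auto simp: scaleR_conv_of_real)
    have xn: "cmod x < 1" using x unfolding V_def by (simp add: dist_norm)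
    have "from0 c x \<in> F" using x interior_subset unfolding V_def by blast
    then have "hseg c (from0 c x) \<subseteq> F" using cvx cF unfolding hconvex_def by blast
    then show "y \<in> F" using hseg_from0[OF c xn, of r] r x by auto
  qed
  show ?thesis using interior_maximal[OF WF oW] inW by blast
qed



lemma twopi_div_eq: assumes "2 * pi / real m = pi / 2" shows "m = 4"
proof -
  have "pi / (real m / 2) = pi / 2" using assms by (simp add: field_simps)
  then have "real m / 2 = 2" using divide_cancel_left[of pi "real m / 2" 2] pi_neq_zero by blast
  then show ?thesis by simp
qed

lemma cis_sg_pi: "sg = 1 \<or> sg = (-1::real) \<Longrightarrow> cis (sg * pi) = -1"
  by (auto simp: complex_eq_iff)

lemma powT:
  assumes dg: "disc_group G" and TG: "T \<in> G" and om: "cmod \<omega> = 1"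
    and rot: "\<forall>w. cmod w < 1 \<longrightarrow> T (from0 c w) = from0 c (\<omega> * w)"
  shows "(T ^^ n) \<in> G \<and> (\<forall>w. cmod w < 1 \<longrightarrow> (T ^^ n) (from0 c w) = from0 c (\<omega> ^ n * w))"
proof (induction n)
  case 0
  then show ?case using dg unfolding disc_group_def by (simp add: id_def)
next
  case (Suc n)
  have "T ^^ Suc n = T \<circ> (T ^^ n)" by simp
  moreover have "T \<circ> (T ^^ n) \<in> G" using Suc TG dg unfolding disc_group_def by blast
  moreover have "(T ^^ Suc n) (from0 c w) = from0 c (\<omega> ^ Suc n * w)" if w: "cmod w < 1" for w
  proof -
    have "cmod (\<omega> ^ n * w) < 1" using om w by (simp add: norm_mult norm_power)
    then show ?thesis using Suc w rot by (simp add: mult.assoc)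
  qed
  ultimately show ?case by (metis (no_types, lifting))
qed

lemma ray_eq:
  assumes s: "s > 0" and uh: "cmod uh = 1" and r: "r \<ge> 0"
    and e: "complex_of_real s * cis x * uh = complex_of_real r * cis y * uh"
  shows "cos (x - y) = 1"
proof -
  have uh0: "uh \<noteq> 0" using uh by auto
  have "complex_of_real s * cis x = complex_of_real r * cis y" using e uh0 by simp
  then have "cis x = complex_of_real (r / s) * cis y" using s by (simp add: field_simps)
  then have h: "cis (x - y) = complex_of_real (r / s)" by (simp add: cis_divide[symmetric])
  show ?thesis by (rule cis_real_cos1[OF h]) (use r s in simp)
qed

lemma arc_interior:
  assumes cont: "continuous_on UNIV P" and clF: "closed F" and J: "connected J"
    and nf: "\<forall>t\<in>J. P t \<notin> frontier F" and t1: "t1 \<in> J" "P t1 \<in> interior F"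
  shows "\<forall>t\<in>J. P t \<in> interior F"
proof -
  define A where "A = P -` interior F"
  define B where "B = P -` (- F)"
  have oA: "open A" unfolding A_def using cont continuous_on_open_vimage[of UNIV P] by auto
  have oB: "open B" unfolding B_def using cont clF continuous_on_open_vimage[of UNIV P] by (auto simp: open_Compl)
  have AB: "A \<inter> B \<inter> J = {}" unfolding A_def B_def using interior_subset by blast
  have JAB: "J \<subseteq> A \<union> B"
  proof
    fix t assume t: "t \<in> J"
    show "t \<in> A \<union> B"
    proof (cases "P t \<in> F")
      case True
      then have "P t \<in> interior F" using nf t clF by (auto simp: frontier_def)
      then show ?thesis unfolding A_def by simp
    next
      case False then show ?thesis unfolding B_def by simp
    qed
  qed
  have "A \<inter> J = {} \<or> B \<inter> J = {}" using connectedD[OF J oA oB AB JAB] .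
  moreover have "A \<inter> J \<noteq> {}" using t1 unfolding A_def by blast
  ultimately have "B \<inter> J = {}" by blast
  then show ?thesis using JAB unfolding A_def by blast
qed

lemma local_vertex:
  assumes dg: "disc_group G" and TG: "T \<in> G" and c: "cmod c < 1" and q1: "cmod q1 < 1"
    and Tc: "T c = c" and Tq: "T q1 = q3"
    and ang: "hangle c q1 q3 = 2 * pi / real m" and odd: "odd m" and m2: "m \<ge> 2"
    and Fd: "F \<subseteq> disc" and clF: "closed F" and cvx: "hconvex F" and intne: "interior F \<noteq> {}"
    and fr: "frontier F \<subseteq> hseg c q1 \<union> hseg c q3 \<union> K" and clK: "closed K" and cK: "c \<notin> K"
    and s1: "hseg c q1 \<subseteq> frontier F" and s3: "hseg c q3 \<subseteq> frontier F"
    and disj: "\<forall>g\<in>G. g \<noteq> id \<longrightarrow> g ` interior F \<inter> interior F = {}"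
  shows "hline c q1 \<inter> (\<Union>g\<in>G. g ` interior F) \<noteq> {} \<and> hline c q3 \<inter> (\<Union>g\<in>G. g ` interior F) \<noteq> {}"
proof -
  have m3: "m \<ge> 3" using odd m2 by presburger
  have autT: "disc_aut T" using dg TG unfolding disc_group_def by blast
  obtain \<omega> where om: "cmod \<omega> = 1" and rot: "\<forall>w. cmod w < 1 \<longrightarrow> T (from0 c w) = from0 c (\<omega> * w)"
    using stab_rot[OF autT c Tc] by blast
  define u where "u = to0 c q1"
  have un: "cmod u < 1" unfolding u_def using to0_disc[OF c q1] .
  have q1e: "q1 = from0 c u" unfolding u_def using from0_to0_inv[OF c q1] by simp
  have omu: "cmod (\<omega> * u) < 1" using om un by (simp add: norm_mult)
  have q3e: "q3 = from0 c (\<omega> * u)" using Tq rot q1e un by simp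
  have tq3: "to0 c q3 = \<omega> * u" using q3e to0_from0_inv[OF c omu] by simp
  have q3: "cmod q3 < 1" using q3e from0_disc[OF c omu] by simp
  have u0: "u \<noteq> 0"
  proof
    assume "u = 0"
    then have "hangle c q1 q3 = pi / 2" using hangle_zero_pi2[of c q1 q3] u_def by simp
    then have "m = 4" using ang twopi_div_eq by simp
    then show False using odd by simp
  qed
  have nu: "cmod u > 0" using u0 by simp
  have omRe: "Re \<omega> = cos (2 * pi / real m)"
  proof -
    have h: "Re (u * cnj (\<omega> * u)) / (cmod u * cmod (\<omega> * u)) = cos (2 * pi / real m)"
      using hangle_cos[OF ang] unfolding u_def[symmetric] tq3 .
    have "Re (u * cnj (\<omega> * u)) = Re \<omega> * (cmod u)^2"
      unfolding cmod_power2 by (simp add: algebra_simps power2_eq_square)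
    moreover have "cmod u * cmod (\<omega> * u) = (cmod u)^2" using om by (simp add: norm_mult power2_eq_square)
    ultimately show ?thesis using h nu by simp
  qed
  obtain sg :: real where sg: "sg = 1 \<or> sg = -1" and ome: "\<omega> = cis (sg * (2 * pi / real m))"
    using unit_cos[OF om omRe] by (metis mult_1 mult_minus1)
  define uh where "uh = u / complex_of_real (cmod u)"
  have uh1: "cmod uh = 1" unfolding uh_def using nu by (simp add: norm_divide)
  have ue: "u = complex_of_real (cmod u) * uh" unfolding uh_def using nu by simp
  define Oset where "Oset = from0 c -` (- K) \<inter> ball 0 1"
  have oO: "open Oset" unfolding Oset_def using open_from0_vimage[OF c] clK by (simp add: open_Compl)
  have O0: "0 \<in> Oset" unfolding Oset_def using cK by (simp add: from0_def)
  obtain s0 where s0: "s0 > 0" "ball 0 s0 \<subseteq> Oset" using oO O0 open_contains_ball by blast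
  obtain z0 where z0: "z0 \<in> interior F" using intne by blast
  have z0n: "cmod z0 < 1" using z0 interior_subset Fd by (auto simp: disc_def)
  define w0 where "w0 = to0 c z0"
  have w0n: "cmod w0 < 1" unfolding w0_def using to0_disc[OF c z0n] .
  have z0e: "z0 = from0 c w0" unfolding w0_def using from0_to0_inv[OF c z0n] by simp
  have frint: "frontier F \<inter> interior F = {}" by (auto simp: frontier_def)
  have frF: "frontier F \<subseteq> F" using clF by (simp add: frontier_subset_closed)
  have c_fr: "c \<in> frontier F"
  proof -
    have "from0 c (complex_of_real 0 * u) \<in> hseg c q1" using hseg_from0[OF c un, of 0] q1e by simp
    then show ?thesis using s1 by (auto simp: from0_def)
  qed
  have cF: "c \<in> F" using c_fr frF by blast
  have w00: "w0 \<noteq> 0"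
  proof
    assume "w0 = 0"
    then have "z0 = c" using z0e by (simp add: from0_def)
    then show False using z0 c_fr frint by blast
  qed
  have nw0: "cmod w0 > 0" using w00 by simp
  define s where "s = min s0 (min (cmod w0) (cmod u)) / 2"
  have sp: "0 < s" "s < s0" "s < cmod w0" "s < cmod u" "s < 1"
  proof -
    have "min s0 (min (cmod w0) (cmod u)) > 0" using s0 nw0 nu by simp
    moreover have "min s0 (min (cmod w0) (cmod u)) \<le> s0" "min s0 (min (cmod w0) (cmod u)) \<le> cmod w0"
      "min s0 (min (cmod w0) (cmod u)) \<le> cmod u" by auto
    ultimately show "0 < s" "s < s0" "s < cmod w0" "s < cmod u" "s < 1" unfolding s_def using un by linarith+
  qed
  have cone: "from0 c (complex_of_real (s / cmod w0) * w0) \<in> interior F"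
  proof (rule interior_cone[OF cvx cF c w0n])
    show "from0 c w0 \<in> interior F" using z0 z0e by simp
    show "0 < s / cmod w0" using sp nw0 by simp
    show "s / cmod w0 \<le> 1" using sp nw0 by simp
  qed
  define \<nu> where "\<nu> = (w0 / complex_of_real (cmod w0)) / uh"
  have nu1: "cmod \<nu> = 1" unfolding \<nu>_def using uh1 nw0 by (auto simp: norm_divide norm_mult)
  obtain ts where ts: "0 \<le> ts" "ts < 2 * pi" "\<nu> = cis (sg * ts)" using angle_param[OF nu1 sg] by blast
  define P where "P = (\<lambda>t. from0 c (complex_of_real s * cis (sg * t) * uh))"
  have Pn: "cmod (complex_of_real s * cis (sg * t) * uh) = s" for t
    using uh1 sp by (simp add: norm_mult)
  have Pts: "P ts \<in> interior F"
  proof -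
    have "complex_of_real s * cis (sg * ts) * uh = complex_of_real (s / cmod w0) * w0"
      unfolding ts(3)[symmetric] \<nu>_def using uh1 nw0 by (auto simp: field_simps)
    then show ?thesis using cone unfolding P_def by simp
  qed
  have Pd: "cmod (complex_of_real s * cis (sg * t) * uh) < 1" for t using Pn sp by simp
  have notK: "P t \<notin> K" for t
  proof -
    have "complex_of_real s * cis (sg * t) * uh \<in> ball 0 s0" using Pn sp by (simp add: dist_norm)
    then show ?thesis using s0 unfolding P_def Oset_def by blast
  qed
  have sgc: "cos (sg * x) = cos x" for x using sg by auto
  have not1: "P t \<notin> hseg c q1" if t: "0 < t" "t < 2 * pi" for t
  proof
    assume "P t \<in> hseg c q1"
    then obtain \<tau> where tau: "0 \<le> \<tau>" "\<tau> \<le> 1" and e: "P t = from0 c (complex_of_real \<tau> * u)"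
      unfolding hseg_def u_def by blast
    have tn: "cmod (complex_of_real \<tau> * u) < 1"
    proof -
      have "cmod (complex_of_real \<tau> * u) = \<tau> * cmod u" using tau by (simp add: norm_mult)
      also have "\<dots> \<le> 1 * cmod u" using tau by (intro mult_right_mono) auto
      finally show ?thesis using un by simp
    qed
    have "complex_of_real s * cis (sg * t) * uh = complex_of_real \<tau> * u"
      using arg_cong[OF e, of "to0 c"] to0_from0_inv[OF c tn] to0_from0_inv[OF c Pd] unfolding P_def by simp
    also have "\<dots> = complex_of_real (\<tau> * cmod u) * cis 0 * uh"
      by (subst (1) ue) (simp only: of_real_mult cis_zero mult_1_right mult.assoc)
    finally have eq: "complex_of_real s * cis (sg * t) * uh = complex_of_real (\<tau> * cmod u) * cis 0 * uh" .
    have "cos (sg * t - 0) = 1" by (rule ray_eq[OF sp(1) uh1 _ eq]) (use tau nu in simp)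
    then have "cos t = 1" using sgc by simp
    then have "t = 0" using cos1_small t by simp
    then show False using t by simp
  qed
  have not3: "P t \<notin> hseg c q3" if t: "0 < t" "t < 2 * pi" "t \<noteq> 2 * pi / real m" for t
  proof
    assume "P t \<in> hseg c q3"
    then obtain \<tau> where tau: "0 \<le> \<tau>" "\<tau> \<le> 1" and e: "P t = from0 c (complex_of_real \<tau> * (\<omega> * u))"
      unfolding hseg_def tq3 by blast
    have tn: "cmod (complex_of_real \<tau> * (\<omega> * u)) < 1"
    proof -
      have "cmod (complex_of_real \<tau> * (\<omega> * u)) = \<tau> * cmod (\<omega> * u)" using tau by (simp add: norm_mult)
      also have "\<dots> \<le> 1 * cmod (\<omega> * u)" using tau by (intro mult_right_mono) auto
      finally show ?thesis using omu by simp
    qed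
    have "complex_of_real s * cis (sg * t) * uh = complex_of_real \<tau> * (\<omega> * u)"
      using arg_cong[OF e, of "to0 c"] to0_from0_inv[OF c tn] to0_from0_inv[OF c Pd] unfolding P_def by simp
    also have "\<dots> = complex_of_real (\<tau> * cmod u) * cis (sg * (2 * pi / real m)) * uh"
      by (subst (1) ue) (simp only: ome of_real_mult mult.assoc mult.left_commute)
    finally have eq: "complex_of_real s * cis (sg * t) * uh = complex_of_real (\<tau> * cmod u) * cis (sg * (2 * pi / real m)) * uh" .
    have "cos (sg * t - sg * (2 * pi / real m)) = 1" by (rule ray_eq[OF sp(1) uh1 _ eq]) (use tau nu in simp)
    then have "cos (t - 2 * pi / real m) = 1" using sgc[of "t - 2 * pi / real m"] by (simp add: right_diff_distrib)
    moreover have "\<bar>t - 2 * pi / real m\<bar> < 2 * pi"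
    proof -
      have "0 < 2 * pi / real m" using m3 by simp
      moreover have "2 * pi / real m < 2 * pi" using m3 by (simp add: divide_less_eq)
      ultimately show ?thesis using t by linarith
    qed
    ultimately have "t - 2 * pi / real m = 0" using cos1_small by blast
    then show False using t by simp
  qed
  have notfr: "P t \<notin> frontier F" if t: "0 < t" "t < 2 * pi" "t \<noteq> 2 * pi / real m" for t
    using fr notK not1[OF t(1,2)] not3[OF t] by blast
  have su: "0 \<le> s / cmod u" "s / cmod u \<le> 1" using sp nu by auto
  have P0: "P 0 \<in> frontier F"
  proof -
    have "complex_of_real s * cis (sg * 0) * uh = complex_of_real (s / cmod u) * u"
      using nu by (subst (2) ue) simp
    then have "P 0 = from0 c (complex_of_real (s / cmod u) * u)" unfolding P_def by simp
    then have "P 0 \<in> hseg c q1" using hseg_from0[OF c un su] q1e by simp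
    then show ?thesis using s1 by blast
  qed
  have P2: "P (2 * pi / real m) \<in> frontier F"
  proof -
    have "complex_of_real s * cis (sg * (2 * pi / real m)) * uh = complex_of_real (s / cmod u) * (\<omega> * u)"
      using nu unfolding ome by (subst (2) ue) simp
    then have "P (2 * pi / real m) = from0 c (complex_of_real (s / cmod u) * (\<omega> * u))" unfolding P_def by simp
    then have "P (2 * pi / real m) \<in> hseg c q3" using hseg_from0[OF c omu su] q3e by simp
    then show ?thesis using s3 by blast
  qed
  have Pcont: "continuous_on UNIV P"
    unfolding P_def
  proof (rule continuous_on_compose2[OF from0_cont[OF c]])
    show "continuous_on UNIV (\<lambda>t. complex_of_real s * cis (sg * t) * uh)" by (intro continuous_intros)
    show "(\<lambda>t. complex_of_real s * cis (sg * t) * uh) ` UNIV \<subseteq> ball 0 1" using Pd by (auto simp: dist_norm)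
  qed
  have mpos: "0 < 2 * pi / real m" "2 * pi / real m < pi" using m3 by (simp_all add: divide_less_eq)
  have x0: "P (pi / real m) \<in> interior F"
  proof (cases "ts < 2 * pi / real m")
    case True
    have ts0: "ts \<noteq> 0"
    proof
      assume "ts = 0" then show False using Pts P0 frint by auto
    qed
    have "\<forall>t\<in>{0<..<2 * pi / real m}. P t \<in> interior F"
    proof (rule arc_interior[OF Pcont clF])
      show "connected {0<..<2 * pi / real m}" by simp
      show "\<forall>t\<in>{0<..<2 * pi / real m}. P t \<notin> frontier F" using notfr mpos by auto
      show "ts \<in> {0<..<2 * pi / real m}" using True ts ts0 by auto
      show "P ts \<in> interior F" by (rule Pts)
    qed
    moreover have "pi / real m \<in> {0<..<2 * pi / real m}" using m3 by (simp add: divide_less_eq)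
    ultimately show ?thesis by blast
  next
    case False
    have ts2: "ts \<noteq> 2 * pi / real m"
    proof
      assume "ts = 2 * pi / real m" then show False using Pts P2 frint by auto
    qed
    have all: "\<forall>t\<in>{2 * pi / real m<..<2 * pi}. P t \<in> interior F"
    proof (rule arc_interior[OF Pcont clF])
      show "connected {2 * pi / real m<..<2 * pi}" by simp
      show "\<forall>t\<in>{2 * pi / real m<..<2 * pi}. P t \<notin> frontier F" using notfr mpos by auto
      show "ts \<in> {2 * pi / real m<..<2 * pi}" using False ts ts2 by auto
      show "P ts \<in> interior F" by (rule Pts)
    qed
    have "pi \<in> {2 * pi / real m<..<2 * pi}" using mpos pi_gt_zero
      unfolding greaterThanLessThan_iff by (intro conjI; linarith)
    then have a: "P pi \<in> interior F" using all by blast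
    have "pi + 2 * pi / real m \<in> {2 * pi / real m<..<2 * pi}" using mpos pi_gt_zero
      unfolding greaterThanLessThan_iff by (intro conjI; linarith)
    then have b: "P (pi + 2 * pi / real m) \<in> interior F" using all by blast
    have TP: "T (P pi) = P (pi + 2 * pi / real m)"
    proof -
      have "T (P pi) = from0 c (\<omega> * (complex_of_real s * cis (sg * pi) * uh))" unfolding P_def using rot Pd by blast
      also have "\<omega> * (complex_of_real s * cis (sg * pi) * uh) = complex_of_real s * (cis (sg * (2 * pi / real m)) * cis (sg * pi)) * uh"
        unfolding ome by (simp only: mult.assoc mult.left_commute)
      also have "cis (sg * (2 * pi / real m)) * cis (sg * pi) = cis (sg * (pi + 2 * pi / real m))"
        unfolding cis_mult by (rule arg_cong[where f=cis]) (simp add: algebra_simps)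
      finally show ?thesis unfolding P_def .
    qed
    have om1: "\<omega> \<noteq> 1"
    proof
      assume "\<omega> = 1"
      then have "cos (2 * pi / real m) = 1" using omRe by simp
      moreover have "\<bar>2 * pi / real m\<bar> < 2 * pi"
        using abs_of_pos[OF mpos(1)] mpos(2) pi_gt_zero by linarith
      ultimately have "2 * pi / real m = 0" by (rule cos1_small)
      then show False using mpos by linarith
    qed
    have Tid: "T \<noteq> id"
    proof
      assume "T = id"
      then have "q3 = q1" using Tq by simp
      then have "\<omega> * u = u" using tq3 u_def by simp
      then show False using om1 u0 by simp
    qed
    have "T (P pi) \<in> T ` interior F" using a by (rule imageI)
    then have "T (P pi) \<in> T ` interior F \<inter> interior F" using b TP by simp
    moreover have "T ` interior F \<inter> interior F = {}" using disj TG Tid by simp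
    ultimately show ?thesis by simp
  qed
  define k where "k = (m - 1) div 2"
  have mk: "m = 2 * k + 1" unfolding k_def using odd by presburger
  have pk: "\<omega> ^ k * cis (sg * (pi / real m)) = -1"
  proof -
    have "\<omega> ^ k * cis (sg * (pi / real m)) = cis (real k * (sg * (2 * pi / real m)) + sg * (pi / real m))"
      unfolding ome Complex.DeMoivre cis_mult ..
    also have "real k * (sg * (2 * pi / real m)) + sg * (pi / real m) = sg * ((2 * real k + 1) * pi / real m)"
      using m3 by (simp add: field_simps)
    also have "(2 * real k + 1) = real m" using mk by simp
    also have "sg * (real m * pi / real m) = sg * pi" using m3 by simp
    finally show ?thesis using cis_sg_pi[OF sg] by simp
  qed
  obtain Tk: "(T ^^ k) \<in> G" and rk: "\<forall>w. cmod w < 1 \<longrightarrow> (T ^^ k) (from0 c w) = from0 c (\<omega> ^ k * w)"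
    using powT[OF dg TG om rot] by blast
  obtain Tk1: "(T ^^ Suc k) \<in> G" and rk1: "\<forall>w. cmod w < 1 \<longrightarrow> (T ^^ Suc k) (from0 c w) = from0 c (\<omega> ^ Suc k * w)"
    using powT[OF dg TG om rot] by blast
  have y1: "(T ^^ k) (P (pi / real m)) = from0 c (complex_of_real (- s / cmod u) * u)"
  proof -
    have "(T ^^ k) (P (pi / real m)) = from0 c (\<omega> ^ k * (complex_of_real s * cis (sg * (pi / real m)) * uh))"
      unfolding P_def using rk Pd by blast
    also have "\<omega> ^ k * (complex_of_real s * cis (sg * (pi / real m)) * uh) = (\<omega> ^ k * cis (sg * (pi / real m))) * (complex_of_real s * uh)"
      by (simp add: algebra_simps)
    also have "\<dots> = complex_of_real (- s / cmod u) * u" unfolding pk using nu by (subst (2) ue) simp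
    finally show ?thesis .
  qed
  have y3: "(T ^^ Suc k) (P (pi / real m)) = from0 c (complex_of_real (- s / cmod u) * (\<omega> * u))"
  proof -
    have "(T ^^ Suc k) (P (pi / real m)) = from0 c (\<omega> ^ Suc k * (complex_of_real s * cis (sg * (pi / real m)) * uh))"
      unfolding P_def using rk1 Pd by blast
    also have "\<omega> ^ Suc k * (complex_of_real s * cis (sg * (pi / real m)) * uh) = \<omega> * ((\<omega> ^ k * cis (sg * (pi / real m))) * (complex_of_real s * uh))"
      by (simp add: algebra_simps)
    also have "\<dots> = complex_of_real (- s / cmod u) * (\<omega> * u)" unfolding pk using nu by (subst (2) ue) simp
    finally show ?thesis .
  qed
  have nrm: "cmod (complex_of_real (- s / cmod u) * u) < 1"
    unfolding norm_mult norm_of_real using nu sp by simp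
  have nrm3: "cmod (complex_of_real (- s / cmod u) * (\<omega> * u)) < 1"
    unfolding norm_mult norm_of_real using nu sp om by simp
  have "(T ^^ k) (P (pi / real m)) \<in> hline c q1" unfolding hline_def y1 u_def[symmetric] using nrm by blast
  moreover have "(T ^^ k) (P (pi / real m)) \<in> (T ^^ k) ` interior F" using x0 by blast
  moreover have "(T ^^ Suc k) (P (pi / real m)) \<in> hline c q3" unfolding hline_def y3 tq3 using nrm3 by blast
  moreover have "(T ^^ Suc k) (P (pi / real m)) \<in> (T ^^ Suc k) ` interior F" using x0 by blast
  ultimately show ?thesis using Tk Tk1 by blast
qed

lemma hseg_closed: assumes p: "cmod p < 1" and q: "cmod q < 1" shows "closed (hseg p q)"
proof -
  have e: "hseg p q = (\<lambda>t. from0 p (complex_of_real t * to0 p q)) ` {0..1}"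
    unfolding hseg_def by auto
  have sub: "(\<lambda>t. complex_of_real t * to0 p q) ` {0..1} \<subseteq> ball 0 1"
  proof
    fix y assume "y \<in> (\<lambda>t. complex_of_real t * to0 p q) ` {0..1}"
    then obtain t where t: "0 \<le> t" "t \<le> 1" "y = complex_of_real t * to0 p q" by auto
    have "cmod y = t * cmod (to0 p q)" using t by (simp add: norm_mult)
    also have "\<dots> \<le> 1 * cmod (to0 p q)" using t by (intro mult_right_mono) auto
    finally show "y \<in> ball 0 1" using to0_disc[OF p q] by (simp add: dist_norm)
  qed
  have "continuous_on {0..1} (\<lambda>t. from0 p (complex_of_real t * to0 p q))"
    by (rule continuous_on_compose2[OF from0_cont[OF p] _ sub]) (intro continuous_intros)
  then have "compact (hseg p q)" unfolding e by (intro compact_continuous_image) auto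
  then show ?thesis by (rule compact_imp_closed)
qed

lemma transfer':
  assumes dg: "disc_group G" and c: "cmod c < 1" and q1: "cmod q1 < 1" and q2: "cmod q2 < 1"
    and card: "card {g\<in>G. g c = c} = m" and odd: "odd m" and ang: "hangle c q2 q1 = pi / real m"
    and h: "hline c q1 \<inter> (\<Union>g\<in>G. g ` interior F) \<noteq> {}"
  shows "hline c q2 \<inter> (\<Union>g\<in>G. g ` interior F) \<noteq> {}"
proof -
  obtain x h where "x \<in> hline c q1" "h \<in> G" "x \<in> h ` interior F" using h by blast
  then show ?thesis using transfer[OF dg c q1 q2 card odd ang] by blast
qed

lemma not_on_seg:
  assumes p: "cmod p < 1" and q: "cmod q < 1" and xp: "x \<noteq> p" and x: "x \<in> hseg p q"
  shows "hangle p q x = 0"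
  using x hangle_seg[OF p q _ _ _ xp] unfolding hseg_def by blast

lemma pim_pos: "m \<ge> (2::nat) \<Longrightarrow> pi / real m \<noteq> 0" by simp

theorem lemma4p1:
  fixes G :: "(complex \<Rightarrow> complex) set"
    and A B T1 T2 T3 T4 :: "complex \<Rightarrow> complex"
    and m1 m2 m3 :: nat
    and F :: "complex set"
    and v1 v2 v3 v4 :: complex
  assumes m_ge: "m1 \<ge> 2" "m2 \<ge> 2" "m3 \<ge> 2"
    and hyp: "1 / real m1 + 1 / real m2 + 1 / real m3 < 1"
    and fuchs: "fuchsian G" and cocpt: "cocompact G"
    and pres: "generated_by G A B" "A ^^ m1 = id" "B ^^ m2 = id" "(A \<circ> B) ^^ m3 = id"
    and fd: "fundamental_domain G F"
    and quad: "compact F" "hconvex F" "{v1, v2, v3, v4} \<subseteq> disc"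
      "frontier F = hseg v1 v2 \<union> hseg v2 v3 \<union> hseg v3 v4 \<union> hseg v4 v1"
    and angles: "hangle v1 v4 v2 = pi / real m3" "hangle v2 v1 v3 = 2 * pi / real m2"
      "hangle v3 v2 v4 = pi / real m3" "hangle v4 v3 v1 = 2 * pi / real m1"
    and pairing: "{T1, T2, T3, T4} \<subseteq> G"
      "T1 ` hseg v1 v2 = hseg v2 v3" "T2 ` hseg v2 v3 = hseg v1 v2"
      "T3 ` hseg v3 v4 = hseg v4 v1" "T4 ` hseg v4 v1 = hseg v3 v4"
      "T1 v1 = v3" "T3 v3 = v1" "T2 v2 = v2" "T4 v4 = v4"
      "T2 \<circ> T1 = id" "T1 \<circ> T2 = id" "T4 \<circ> T3 = id" "T3 \<circ> T4 = id"
    and stab: "card {g\<in>G. g v1 = v1} = m3" "card {g\<in>G. g v3 = v3} = m3"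
      "card {g\<in>G. g v2 = v2} = m2" "card {g\<in>G. g v4 = v4} = m1"
    and odd2: "(odd m1 \<and> odd m2) \<or> (odd m1 \<and> odd m3) \<or> (odd m2 \<and> odd m3)"
  shows "\<forall>(p, q) \<in> {(v1, v2), (v2, v3), (v3, v4), (v4, v1)}.
           hline p q \<inter> (\<Union>g\<in>G. g ` interior F) \<noteq> {}"
proof -
  have dg: "disc_group G" using fuchs unfolding fuchsian_def by blast
  have vn: "cmod v1 < 1" "cmod v2 < 1" "cmod v3 < 1" "cmod v4 < 1" using quad(3) by (auto simp: disc_def)
  have Fd: "F \<subseteq> disc" and clF: "closed F" and intne: "interior F \<noteq> {}"
    and disj: "\<forall>g\<in>G. g \<noteq> id \<longrightarrow> g ` interior F \<inter> interior F = {}"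
    using fd unfolding fundamental_domain_def by auto
  have TG: "T1 \<in> G" "T2 \<in> G" "T3 \<in> G" "T4 \<in> G" using pairing(1) by auto
  have T1v2: "T1 v2 = v2" using pairing(8) pairing(11) by (metis comp_apply id_apply)
  have T3v4: "T3 v4 = v4" using pairing(9) pairing(13) by (metis comp_apply id_apply)
  define U where "U = (\<Union>g\<in>G. g ` interior F)"
  have p3: "pi / real m3 \<noteq> 0" using m_ge by simp
  have cl: "closed (hseg v1 v2)" "closed (hseg v2 v3)" "closed (hseg v3 v4)" "closed (hseg v4 v1)"
    using hseg_closed vn by auto
  have L2: "hline v2 v1 \<inter> U \<noteq> {} \<and> hline v2 v3 \<inter> U \<noteq> {}" if odd2: "odd m2"
  proof -
    have v12: "v1 \<noteq> v2"
    proof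
      assume "v1 = v2"
      then have "hangle v2 v1 v3 = pi / 2" using hangle_zero_pi2[of v2 v1 v3] by (simp add: to0_def)
      then have "m2 = 4" using angles(2) twopi_div_eq by simp
      then show False using odd2 by simp
    qed
    have v32: "v3 \<noteq> v2"
    proof
      assume "v3 = v2"
      then have "hangle v2 v1 v3 = pi / 2" using hangle_zero_pi2[of v2 v1 v3] by (simp add: to0_def)
      then have "m2 = 4" using angles(2) twopi_div_eq by simp
      then show False using odd2 by simp
    qed
    have nK1: "v2 \<notin> hseg v3 v4"
    proof
      assume "v2 \<in> hseg v3 v4"
      then have "hangle v3 v4 v2 = 0" using not_on_seg[OF vn(3) vn(4)] v32 by metis
      then show False using angles(3) hangle_sym p3 by metis
    qed
    have nK2: "v2 \<notin> hseg v4 v1"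
    proof
      assume "v2 \<in> hseg v4 v1"
      then have "v2 \<in> hseg v1 v4" using hseg_sym vn by blast
      then have "hangle v1 v4 v2 = 0" using not_on_seg[OF vn(1) vn(4)] v12 by metis
      then show False using angles(1) p3 by simp
    qed
    have fr: "frontier F \<subseteq> hseg v2 v1 \<union> hseg v2 v3 \<union> (hseg v3 v4 \<union> hseg v4 v1)"
      using quad(4) hseg_sym[OF vn(1) vn(2)] by auto
    have s1: "hseg v2 v1 \<subseteq> frontier F" using quad(4) hseg_sym[OF vn(1) vn(2)] by auto
    have s3: "hseg v2 v3 \<subseteq> frontier F" using quad(4) by auto
    show ?thesis unfolding U_def
      by (rule local_vertex[OF dg TG(1) vn(2) vn(1) T1v2 pairing(6) angles(2) odd2 m_ge(2) Fd clF quad(2) intne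
          fr closed_Un[OF cl(3) cl(4)] _ s1 s3 disj]) (use nK1 nK2 in blast)
  qed
  have L4: "hline v4 v3 \<inter> U \<noteq> {} \<and> hline v4 v1 \<inter> U \<noteq> {}" if odd1: "odd m1"
  proof -
    have v34: "v3 \<noteq> v4"
    proof
      assume "v3 = v4"
      then have "hangle v4 v3 v1 = pi / 2" using hangle_zero_pi2[of v4 v3 v1] by (simp add: to0_def)
      then have "m1 = 4" using angles(4) twopi_div_eq by simp
      then show False using odd1 by simp
    qed
    have v14: "v1 \<noteq> v4"
    proof
      assume "v1 = v4"
      then have "hangle v4 v3 v1 = pi / 2" using hangle_zero_pi2[of v4 v3 v1] by (simp add: to0_def)
      then have "m1 = 4" using angles(4) twopi_div_eq by simp
      then show False using odd1 by simp
    qed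
    have nK1: "v4 \<notin> hseg v1 v2"
    proof
      assume "v4 \<in> hseg v1 v2"
      then have "hangle v1 v2 v4 = 0" using not_on_seg[OF vn(1) vn(2)] v14 by metis
      then show False using angles(1) hangle_sym p3 by metis
    qed
    have nK2: "v4 \<notin> hseg v2 v3"
    proof
      assume "v4 \<in> hseg v2 v3"
      then have "v4 \<in> hseg v3 v2" using hseg_sym vn by blast
      then have "hangle v3 v2 v4 = 0" using not_on_seg[OF vn(3) vn(2)] v34 by metis
      then show False using angles(3) p3 by simp
    qed
    have fr: "frontier F \<subseteq> hseg v4 v3 \<union> hseg v4 v1 \<union> (hseg v1 v2 \<union> hseg v2 v3)"
      using quad(4) hseg_sym[OF vn(3) vn(4)] by auto
    have s1: "hseg v4 v3 \<subseteq> frontier F" using quad(4) hseg_sym[OF vn(3) vn(4)] by auto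
    have s3: "hseg v4 v1 \<subseteq> frontier F" using quad(4) by auto
    show ?thesis unfolding U_def
      by (rule local_vertex[OF dg TG(3) vn(4) vn(3) T3v4 pairing(7) angles(4) odd1 m_ge(1) Fd clF quad(2) intne
          fr closed_Un[OF cl(1) cl(2)] _ s1 s3 disj]) (use nK1 nK2 in blast)
  qed
  have A1: "hangle v1 v4 v2 = pi / real m3" "hangle v1 v2 v4 = pi / real m3"
    using angles(1) hangle_sym by metis+
  have A3: "hangle v3 v2 v4 = pi / real m3" "hangle v3 v4 v2 = pi / real m3"
    using angles(3) hangle_sym by metis+
  have T13: "hline v1 v2 \<inter> U \<noteq> {} \<Longrightarrow> hline v1 v4 \<inter> U \<noteq> {}" if "odd m3"
    unfolding U_def by (rule transfer'[OF dg vn(1) vn(2) vn(4) stab(1) that A1(1)])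
  have T31: "hline v1 v4 \<inter> U \<noteq> {} \<Longrightarrow> hline v1 v2 \<inter> U \<noteq> {}" if "odd m3"
    unfolding U_def by (rule transfer'[OF dg vn(1) vn(4) vn(2) stab(1) that A1(2)])
  have T3a: "hline v3 v4 \<inter> U \<noteq> {} \<Longrightarrow> hline v3 v2 \<inter> U \<noteq> {}" if "odd m3"
    unfolding U_def by (rule transfer'[OF dg vn(3) vn(4) vn(2) stab(2) that A3(1)])
  have T3b: "hline v3 v2 \<inter> U \<noteq> {} \<Longrightarrow> hline v3 v4 \<inter> U \<noteq> {}" if "odd m3"
    unfolding U_def by (rule transfer'[OF dg vn(3) vn(2) vn(4) stab(2) that A3(2)])
  have sym: "hline v1 v2 = hline v2 v1" "hline v2 v3 = hline v3 v2" "hline v3 v4 = hline v4 v3"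
    "hline v4 v1 = hline v1 v4"
    using hline_sym vn by auto
  have goal: "hline v1 v2 \<inter> U \<noteq> {} \<and> hline v2 v3 \<inter> U \<noteq> {} \<and> hline v3 v4 \<inter> U \<noteq> {} \<and> hline v4 v1 \<inter> U \<noteq> {}"
    using odd2
  proof (elim disjE conjE)
    assume o1: "odd m1" and o2: "odd m2"
    show ?thesis using L2[OF o2] L4[OF o1] sym by simp
  next
    assume o1: "odd m1" and o3: "odd m3"
    have a: "hline v4 v3 \<inter> U \<noteq> {}" "hline v4 v1 \<inter> U \<noteq> {}" using L4[OF o1] by auto
    have b: "hline v1 v2 \<inter> U \<noteq> {}" using T31[OF o3] a(2) sym(4) by simp
    have d: "hline v3 v2 \<inter> U \<noteq> {}" using T3a[OF o3] a(1) sym(3) by simp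
    show ?thesis using a b d sym by simp
  next
    assume o2: "odd m2" and o3: "odd m3"
    have a: "hline v2 v1 \<inter> U \<noteq> {}" "hline v2 v3 \<inter> U \<noteq> {}" using L2[OF o2] by auto
    have b: "hline v1 v4 \<inter> U \<noteq> {}" using T13[OF o3] a(1) sym(1) by simp
    have d: "hline v3 v4 \<inter> U \<noteq> {}" using T3b[OF o3] a(2) sym(2) by simp
    show ?thesis using a b d sym by simp
  qed
  then show ?thesis unfolding U_def by simp
qed

end
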